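(* Let $R,S$ be (possibly empty) chains and let $T$ be the chain $T=[R^*\,1\,1\,2\,2\,S]$ (concatenation). If $\mathcal{Z}(T)>\tfrac13$, then $\rho_S>\rho_R$ (i.e. $[S]<[R]$ in the paper's ordering).
   Context: A chain is a finite sequence $T=[a_1a_2\dots a_n]$ of positive integers. For a chain $S=[s_1\dots s_m]$ write $\rho_S=[0;s_1,\dots,s_m]$, with $\rho_\emptyset=0$ for the empty chain, and $[s_1;s_2,\dots,s_m]$ for the finite continued fraction, which equals $1/\rho_S$. The reverse of $R=[r_1\dots r_k]$ is $R^*=[r_k\dots r_1]$. Define $\mathcal{Z}(T)=\big(\max_{1\le i\le n}([a_i;a_{i+1},\dots,a_n]+[0;a_{i-1},\dots,a_1])\big)^{-1}$, where for $i=1$ the second summand is $0$. The paper orders chains by $[T_1]<[T_2]\iff\rho_{T_1}>\rho_{T_2}$. *)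

theory Defs
  imports Complex_Main
begin

fun cf :: "nat list \<Rightarrow> real" where
  "cf [] = 0"
| "cf [a] = real a"
| "cf (a # b # xs) = real a + 1 / cf (b # xs)"

definition rho :: "nat list \<Rightarrow> real" where
  "rho S = (if S = [] then 0 else 1 / cf S)"

definition chain :: "nat list \<Rightarrow> bool" where
  "chain T \<longleftrightarrow> (\<forall>a\<in>set T. 0 < a)"

text \<open>Z(T) = (max_i ([a_i; a_{i+1},...,a_n] + [0; a_{i-1},...,a_1]))^{-1},
  with 0-based index i ranging over positions of T.\<close>
definition Zf :: "nat list \<Rightarrow> real" where
  "Zf T = 1 / Max ((\<lambda>i. cf (drop i T) + rho (rev (take i T))) ` {..<length T})"

end

theory Submission
  imports Defs
begin

lemma cf_cons: "cf (a # L) = real a + rho L"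
  by (cases L) (auto simp: rho_def)

lemma rho_cons: "rho (a # L) = 1 / (real a + rho L)"
  by (simp add: rho_def cf_cons)

lemma cf_ge1: "chain L \<Longrightarrow> L \<noteq> [] \<Longrightarrow> cf L \<ge> 1"
proof (induction L)
  case Nil then show ?case by simp
next
  case (Cons a L)
  have a: "a \<ge> 1" using Cons.prems by (auto simp: chain_def)
  show ?case
  proof (cases "L = []")
    case True then show ?thesis using a by simp
  next
    case False
    have "chain L" using Cons.prems by (auto simp: chain_def)
    then have "cf L \<ge> 1" using Cons.IH False by simp
    then have "rho L \<ge> 0" using False by (simp add: rho_def)
    then show ?thesis using a by (simp add: cf_cons)
  qed
qed

lemma rho_nonneg: "chain L \<Longrightarrow> rho L \<ge> 0"
  using cf_ge1[of L] by (cases "L = []") (auto simp: rho_def)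

theorem lemma3p4:
  fixes R S :: "nat list"
  assumes "chain R" and "chain S"
    and "Zf (rev R @ [1, 1, 2, 2] @ S) > 1 / 3"
  shows "rho S > rho R"
proof -
  define T where "T = rev R @ [1, 1, 2, 2] @ S"
  define k where "k = length R"
  define f where "f = (\<lambda>i. cf (drop i T) + rho (rev (take i T)))"
  define x where "x = rho S"
  define y where "y = rho R"
  have x0: "x \<ge> 0" using rho_nonneg[OF assms(2)] x_def by simp
  have y0: "y \<ge> 0" using rho_nonneg[OF assms(1)] y_def by simp
  have dr: "drop (k+2) T = 2 # 2 # S" by (simp add: T_def k_def)
  have tk: "rev (take (k+2) T) = 1 # 1 # R" by (simp add: T_def k_def)
  have fv: "f (k+2) = 2 + 1/(2+x) + (1+y)/(2+y)"
  proof -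
    have "f (k+2) = 2 + 1/(2+x) + 1/(1 + 1/(1+y))"
      unfolding f_def dr tk by (simp add: cf_cons rho_cons x_def y_def)
    also have "1/(1 + 1/(1+y)) = (1+y)/(2+y)" using y0 by (simp add: field_simps)
    finally show ?thesis .
  qed
  have mem: "k+2 \<in> {..<length T}" by (simp add: T_def k_def)
  have fin: "finite (f ` {..<length T})" by simp
  have le: "f (k+2) \<le> Max (f ` {..<length T})"
    using mem fin by (intro Max_ge) auto
  have pos: "f (k+2) > 0" using fv x0 y0 by (simp add: add_pos_nonneg)
  have "1 / Max (f ` {..<length T}) > 1/3" using assms(3)
    by (simp add: Zf_def f_def T_def)
  then have "Max (f ` {..<length T}) < 3"
  proof (cases "Max (f ` {..<length T}) < 3")
    case True then show ?thesis .
  next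
    case False
    then have "1 / Max (f ` {..<length T}) \<le> 1/3"
      by (intro divide_left_mono) auto
    then show ?thesis using \<open>1 / Max (f ` {..<length T}) > 1/3\<close> by simp
  qed
  then have "f (k+2) < 3" using le by simp
  then have "1/(2+x) + (1+y)/(2+y) < 1" using fv by simp
  moreover have "(1+y)/(2+y) = 1 - 1/(2+y)" using y0 by (simp add: field_simps)
  ultimately have "1/(2+x) < 1/(2+y)" by simp
  then have "x > y" using x0 y0
    by (smt (verit) frac_le zero_less_one)
  then show ?thesis by (simp add: x_def y_def)
qed

end
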